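(* Let $p<n$. For every pointed, $n$-dimensional closed convex cone $C\subset\mathbb{R}^n$ and every nonempty compact set $\omega\subset\Omega=S^{n-1}\cap\operatorname{int}C^\circ$, there exist $K,L\in\mathcal{K}(C,\omega)$ with $K\neq L$ and $S_{p,\gamma^{n}}(K,\cdot)=S_{p,\gamma^{n}}(L,\cdot)$.
   Context: $C^\circ=\{x:\langle x,y\rangle\le 0\ \forall y\in C\}$. A $C$-pseudo-cone is a nonempty closed convex set $K\subset\mathbb{R}^n$ with $o\notin K$, $\lambda K\subseteq K$ for all $\lambda\ge1$, and recession cone $\{z:K+z\subseteq K\}=C$. Support function $h_K(u)=\sup_{y\in K}\langle u,y\rangle$ ($u\in C^\circ$). $\mathcal{K}(C,\omega)$ is the class of $C$-pseudo-cones $K$ with $K=C\cap\bigcap_{u\in\omega}\{x:\langle x,u\rangle\le h_K(u)\}$. For Borel $\eta\subset\Omega$, $S_{p,\gamma^n}(K,\eta)=(2\pi)^{-n/2}\int_{\nu_K^{-1}(\eta)}|\langle x,\nu_K(x)\rangle|^{1-p}e^{-|x|^2/2}\,d\mathcal H^{n-1}(x)$, where $\nu_K^{-1}(\eta)$ is the set of boundary points $x$ of $K$ with a unique outer unit normal $\nu_K(x)$ lying in $\eta$. *)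

theory Defs
  imports "HOL-Analysis.Analysis"
begin

section \<open>Convex cones and pseudo-cones\<close>

definition polar_cone :: "'a::euclidean_space set \<Rightarrow> 'a set" where
  "polar_cone C = {x. \<forall>y\<in>C. x \<bullet> y \<le> 0}"

definition pointed_cone :: "'a::euclidean_space set \<Rightarrow> bool" where
  "pointed_cone C \<longleftrightarrow> C \<inter> uminus ` C = {0}"

text \<open>Pointed, full-dimensional, closed convex cone.\<close>
definition pointed_full_cone :: "'a::euclidean_space set \<Rightarrow> bool" where
  "pointed_full_cone C \<longleftrightarrow> cone C \<and> convex C \<and> closed C \<and> pointed_cone C
      \<and> aff_dim C = int DIM('a)"

definition recession_cone :: "'a::euclidean_space set \<Rightarrow> 'a set" where
  "recession_cone K = {z. (\<lambda>y. y + z) ` K \<subseteq> K}"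

definition pseudo_cone :: "'a::euclidean_space set \<Rightarrow> 'a set \<Rightarrow> bool" where
  "pseudo_cone C K \<longleftrightarrow> K \<noteq> {} \<and> closed K \<and> convex K \<and> 0 \<notin> K
      \<and> (\<forall>t::real. t \<ge> 1 \<longrightarrow> (\<lambda>x. t *\<^sub>R x) ` K \<subseteq> K)
      \<and> recession_cone K = C"

definition support_fun :: "'a::euclidean_space set \<Rightarrow> 'a \<Rightarrow> real" where
  "support_fun K u = Sup ((\<lambda>y. u \<bullet> y) ` K)"

text \<open>The set Omega = S^{n-1} \<inter> int C\<degree>.\<close>
definition Omega :: "'a::euclidean_space set \<Rightarrow> 'a set" where
  "Omega C = sphere 0 1 \<inter> interior (polar_cone C)"

text \<open>The class K(C, omega).\<close>
definition Kclass :: "'a::euclidean_space set \<Rightarrow> 'a set \<Rightarrow> 'a set set" where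
  "Kclass C \<omega> = {K. pseudo_cone C K \<and>
      K = C \<inter> (\<Inter>u\<in>\<omega>. {x. x \<bullet> u \<le> support_fun K u})}"

section \<open>Outer unit normals\<close>

definition outer_unit_normals :: "'a::euclidean_space set \<Rightarrow> 'a \<Rightarrow> 'a set" where
  "outer_unit_normals K x = {u. norm u = 1 \<and> (\<forall>y\<in>K. u \<bullet> y \<le> u \<bullet> x)}"

definition unit_normal :: "'a::euclidean_space set \<Rightarrow> 'a \<Rightarrow> 'a" where
  "unit_normal K x = (THE u. u \<in> outer_unit_normals K x)"

text \<open>Boundary points with a unique outer unit normal, that normal lying in eta.\<close>
definition inv_normal :: "'a::euclidean_space set \<Rightarrow> 'a set \<Rightarrow> 'a set" where
  "inv_normal K \<eta> = {x \<in> frontier K. \<exists>u. outer_unit_normals K x = {u} \<and> u \<in> \<eta>}"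

section \<open>Hausdorff measure\<close>

text \<open>Normalising constant so that H^s agrees with Lebesgue measure on R^s.\<close>
definition hausdorff_const :: "nat \<Rightarrow> real" where
  "hausdorff_const s = pi powr (real s / 2) / (Gamma (real s / 2 + 1) * 2 ^ s)"

text \<open>Convention: diam(U)^s is 0 for empty U, and diam^0 = 1 for nonempty U.\<close>
definition hausdorff_pre :: "nat \<Rightarrow> real \<Rightarrow> 'a::euclidean_space set \<Rightarrow> ennreal" where
  "hausdorff_pre s \<delta> A = (INF U \<in> {U :: nat \<Rightarrow> 'a set. A \<subseteq> (\<Union>i. U i) \<and> (\<forall>i. diameter (U i) \<le> \<delta>)}.
      (\<Sum>i. ennreal (if U i = {} then 0 else hausdorff_const s * diameter (U i) ^ s)))"

definition hausdorff_outer :: "nat \<Rightarrow> 'a::euclidean_space set \<Rightarrow> ennreal" where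
  "hausdorff_outer s A = (SUP \<delta> \<in> {0<..}. hausdorff_pre s \<delta> A)"

text \<open>s-dimensional Hausdorff measure on the Borel sets.\<close>
definition hausdorff_measure :: "nat \<Rightarrow> 'a::euclidean_space measure" where
  "hausdorff_measure s = measure_of UNIV (sets borel) (hausdorff_outer s)"

section \<open>Gaussian L_p surface area measure\<close>

definition gauss_Lp_area :: "real \<Rightarrow> 'a::euclidean_space set \<Rightarrow> 'a set \<Rightarrow> ennreal" where
  "gauss_Lp_area p K \<eta> =
     ennreal ((2 * pi) powr (- real DIM('a) / 2)) *
     (\<integral>\<^sup>+ x. indicator (inv_normal K \<eta>) x *
        ennreal (\<bar>x \<bullet> unit_normal K x\<bar> powr (1 - p) * exp (- (norm x)\<^sup>2 / 2))
      \<partial>hausdorff_measure (DIM('a) - 1))"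

end

theory Submission
  imports Defs "HOL-Real_Asymp.Real_Asymp"
begin

lemma Sup_real_unbounded: "\<not> bdd_above (X::real set) \<Longrightarrow> Sup X = (LEAST z::real. False)"
proof -
  assume a: "\<not> bdd_above X"
  have "(\<lambda>z. \<forall>x\<in>X. x \<le> z) = (\<lambda>z. False)" using a by (auto simp: bdd_above_def fun_eq_iff)
  then show ?thesis unfolding Sup_real_def by simp
qed

lemma diameter_unbounded:
  fixes U :: "'a::euclidean_space set"
  assumes "\<not> bounded U"
  shows "diameter U = diameter (UNIV::'a set)"
proof -
  have nb: "\<not> bdd_above ((\<lambda>(x,y). dist x y) ` (S \<times> S))" if "\<not> bounded S" for S :: "'a set"
  proof
    assume "bdd_above ((\<lambda>(x,y). dist x y) ` (S \<times> S))"
    then obtain B where B: "\<And>x y. x \<in> S \<Longrightarrow> y \<in> S \<Longrightarrow> dist x y \<le> B"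
      by (auto simp: bdd_above_def)
    have "S \<noteq> {}" using that by auto
    then obtain x0 where "x0 \<in> S" by auto
    then have "bounded S" unfolding bounded_def using B by blast
    with that show False by simp
  qed
  have "U \<noteq> {}" using assms by auto
  then show ?thesis
    unfolding diameter_def using nb[OF assms] nb[OF not_bounded_UNIV]
    by (simp add: Sup_real_unbounded)
qed

lemma diameter_scale:
  fixes U :: "'a::euclidean_space set"
  assumes "bounded U" "t > 0"
  shows "diameter ((\<lambda>x. t *\<^sub>R x) ` U) = t * diameter U"
proof (cases "U = {}")
  case True then show ?thesis by simp
next
  case False
  have bt: "bounded ((\<lambda>x. t *\<^sub>R x) ` U)"
    using assms by (simp add: bounded_scaling)
  have "diameter ((\<lambda>x. t *\<^sub>R x) ` U) \<le> t * diameter U"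
  proof (rule diameter_le)
    show "(\<lambda>x. t *\<^sub>R x) ` U \<noteq> {} \<or> 0 \<le> t * diameter U" using False by auto
    fix x y assume "x \<in> (\<lambda>x. t *\<^sub>R x) ` U" "y \<in> (\<lambda>x. t *\<^sub>R x) ` U"
    then obtain a b where ab: "a \<in> U" "b \<in> U" "x = t *\<^sub>R a" "y = t *\<^sub>R b" by auto
    have "norm (x - y) = t * dist a b"
      using ab assms(2) by (simp add: dist_norm flip: scaleR_diff_right)
    also have "\<dots> \<le> t * diameter U"
      using diameter_bounded_bound[OF assms(1) ab(1,2)] assms(2) by simp
    finally show "norm (x - y) \<le> t * diameter U" .
  qed
  moreover have "diameter U \<le> diameter ((\<lambda>x. t *\<^sub>R x) ` U) / t"
  proof (rule diameter_le)
    show "U \<noteq> {} \<or> 0 \<le> diameter ((\<lambda>x. t *\<^sub>R x) ` U) / t" using False by auto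
    fix x y assume xy: "x \<in> U" "y \<in> U"
    have "t * norm (x - y) = dist (t *\<^sub>R x) (t *\<^sub>R y)"
      using assms(2) by (simp add: dist_norm flip: scaleR_diff_right)
    also have "\<dots> \<le> diameter ((\<lambda>x. t *\<^sub>R x) ` U)"
      by (rule diameter_bounded_bound[OF bt]) (use xy in auto)
    finally show "norm (x - y) \<le> diameter ((\<lambda>x. t *\<^sub>R x) ` U) / t"
      using assms(2) by (simp add: field_simps)
  qed
  ultimately show ?thesis using assms(2) by (simp add: field_simps)
qed

lemma diameter_translate:
  fixes U :: "'a::euclidean_space set"
  shows "diameter ((\<lambda>x. v + x) ` U) = diameter U"
proof -
  have "(\<lambda>(x,y). dist x y) ` ((\<lambda>x. v + x) ` U \<times> (\<lambda>x. v + x) ` U) = (\<lambda>(x,y). dist x y) ` (U \<times> U)"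
    by (auto simp: image_iff dist_norm) (metis add_diff_cancel_left)+
  then show ?thesis unfolding diameter_def by simp
qed

lemma ennreal_INF_mult_le:
  fixes c :: ennreal
  assumes "0 < c" "c < top"
  shows "(INF x\<in>X. c * f x) \<le> c * (INF x\<in>X. f x)"
proof -
  let ?m = "INF x\<in>X. c * f x"
  have ci: "c * inverse c = 1"
    using assms divide_ennreal_def ennreal_divide_self top.not_eq_extremum by auto
  have "?m * inverse c \<le> f x" if "x \<in> X" for x
  proof -
    have "?m * inverse c \<le> c * f x * inverse c"
      by (rule mult_right_mono) (use that in \<open>auto intro: INF_lower\<close>)
    also have "\<dots> = f x" using ci by (metis mult.assoc mult.commute mult_1)
    finally show ?thesis .
  qed
  then have "?m * inverse c \<le> (INF x\<in>X. f x)" by (rule INF_greatest)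
  then have "c * (?m * inverse c) \<le> c * (INF x\<in>X. f x)"
    by (rule mult_left_mono) simp
  moreover have "c * (?m * inverse c) = ?m" using ci by (metis mult.assoc mult.commute mult_1)
  ultimately show ?thesis by simp
qed

definition hcost :: "nat \<Rightarrow> (nat \<Rightarrow> 'a::euclidean_space set) \<Rightarrow> ennreal" where
  "hcost s U = (\<Sum>i. ennreal (if U i = {} then 0 else hausdorff_const s * diameter (U i) ^ s))"

lemma hausdorff_pre_alt:
  "hausdorff_pre s \<delta> A = (INF U\<in>{U. A \<subseteq> (\<Union>i. U i) \<and> (\<forall>i. diameter (U i) \<le> \<delta>)}. hcost s U)"
  by (simp add: hausdorff_pre_def hcost_def)

lemma hconst_nonneg: "0 \<le> hausdorff_const s"
  unfolding hausdorff_const_def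
  by (intro divide_nonneg_pos mult_pos_pos) (auto intro: Gamma_real_pos)

lemma hcost_scale:
  fixes U :: "nat \<Rightarrow> 'a::euclidean_space set"
  assumes "t > 0" "\<And>i. bounded (U i)"
  shows "hcost s (\<lambda>i. (\<lambda>x. t *\<^sub>R x) ` U i) = ennreal (t ^ s) * hcost s U"
proof -
  have "ennreal (if (\<lambda>x. t *\<^sub>R x) ` U i = {} then 0 else hausdorff_const s * diameter ((\<lambda>x. t *\<^sub>R x) ` U i) ^ s)
      = ennreal (t ^ s) * ennreal (if U i = {} then 0 else hausdorff_const s * diameter (U i) ^ s)" for i
  proof (cases "U i = {}")
    case True then show ?thesis by simp
  next
    case False
    have e: "hausdorff_const s * diameter ((\<lambda>x. t *\<^sub>R x) ` U i) ^ s = t ^ s * (hausdorff_const s * diameter (U i) ^ s)"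
      using diameter_scale[OF assms(2) assms(1)] by (simp add: power_mult_distrib)
    have nn: "0 \<le> hausdorff_const s * diameter (U i) ^ s"
      using hconst_nonneg diameter_ge_0[OF assms(2)] by simp
    have "ennreal (t ^ s * (hausdorff_const s * diameter (U i) ^ s)) = ennreal (t ^ s) * ennreal (hausdorff_const s * diameter (U i) ^ s)"
      using nn assms(1) by (simp add: ennreal_mult)
    then show ?thesis using False unfolding e by simp
  qed
  then show ?thesis unfolding hcost_def by simp
qed

lemma pre_scale_le:
  fixes A :: "'a::euclidean_space set"
  assumes d0: "diameter (UNIV::'a set) > 0" and t: "t > 0" and "0 < \<delta>'" "\<delta>' < diameter (UNIV::'a set)" "t * \<delta>' \<le> \<delta>"
  shows "hausdorff_pre s \<delta> ((\<lambda>x. t *\<^sub>R x) ` A) \<le> ennreal (t ^ s) * hausdorff_pre s \<delta>' A"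
proof -
  have "hausdorff_pre s \<delta> ((\<lambda>x. t *\<^sub>R x) ` A) \<le>
        (INF V\<in>{U. A \<subseteq> (\<Union>i. U i) \<and> (\<forall>i. diameter (U i) \<le> \<delta>')}. ennreal (t ^ s) * hcost s V)"
    unfolding hausdorff_pre_alt
  proof (rule INF_mono)
    fix V :: "nat \<Rightarrow> 'a set" assume V: "V \<in> {U. A \<subseteq> (\<Union>i. U i) \<and> (\<forall>i. diameter (U i) \<le> \<delta>')}"
    have bV: "bounded (V i)" for i
    proof (rule ccontr)
      assume "\<not> bounded (V i)"
      then have "diameter (V i) = diameter (UNIV::'a set)" by (rule diameter_unbounded)
      moreover from V have "diameter (V i) \<le> \<delta>'" by auto
      ultimately show False using assms(4) by simp
    qed
    show "\<exists>W\<in>{U. (\<lambda>x. t *\<^sub>R x) ` A \<subseteq> (\<Union>i. U i) \<and> (\<forall>i. diameter (U i) \<le> \<delta>)}.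
            hcost s W \<le> ennreal (t ^ s) * hcost s V"
    proof (intro bexI[of _ "\<lambda>i. (\<lambda>x. t *\<^sub>R x) ` V i"] CollectI conjI allI)
      show "hcost s (\<lambda>i. (\<lambda>x. t *\<^sub>R x) ` V i) \<le> ennreal (t ^ s) * hcost s V"
        using hcost_scale[OF t bV] by simp
      show "(\<lambda>x. t *\<^sub>R x) ` A \<subseteq> (\<Union>i. (\<lambda>x. t *\<^sub>R x) ` V i)" using V by blast
      fix i
      have "diameter ((\<lambda>x. t *\<^sub>R x) ` V i) = t * diameter (V i)" by (rule diameter_scale[OF bV t])
      also have "\<dots> \<le> t * \<delta>'" using V t by (intro mult_left_mono) auto
      finally show "diameter ((\<lambda>x. t *\<^sub>R x) ` V i) \<le> \<delta>" using assms(5) by simp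
    qed
  qed
  also have "\<dots> \<le> ennreal (t ^ s) * hausdorff_pre s \<delta>' A"
    unfolding hausdorff_pre_alt by (rule ennreal_INF_mult_le) (use t in auto)
  finally show ?thesis .
qed

lemma outer_scale_le:
  fixes A :: "'a::euclidean_space set"
  assumes d0: "diameter (UNIV::'a set) > 0" and t: "t > 0"
  shows "hausdorff_outer s ((\<lambda>x. t *\<^sub>R x) ` A) \<le> ennreal (t ^ s) * hausdorff_outer s A"
  unfolding hausdorff_outer_def
proof (rule SUP_least)
  fix \<delta> :: real assume "\<delta> \<in> {0<..}"
  then have d: "\<delta> > 0" by simp
  define \<delta>' where "\<delta>' = min (\<delta> / t) (diameter (UNIV::'a set) / 2)"
  have d': "0 < \<delta>'" "\<delta>' < diameter (UNIV::'a set)" "t * \<delta>' \<le> \<delta>"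
    using d d0 t by (auto simp: \<delta>'_def min_def field_simps)
  have "hausdorff_pre s \<delta> ((\<lambda>x. t *\<^sub>R x) ` A) \<le> ennreal (t ^ s) * hausdorff_pre s \<delta>' A"
    by (rule pre_scale_le[OF d0 t d'])
  also have "\<dots> \<le> ennreal (t ^ s) * (SUP \<delta>\<in>{0<..}. hausdorff_pre s \<delta> A)"
    by (intro mult_left_mono SUP_upper) (use d' in auto)
  finally show "hausdorff_pre s \<delta> ((\<lambda>x. t *\<^sub>R x) ` A) \<le> ennreal (t ^ s) * (SUP \<delta>\<in>{0<..}. hausdorff_pre s \<delta> A)" .
qed

lemma outer_scale:
  fixes A :: "'a::euclidean_space set"
  assumes d0: "diameter (UNIV::'a set) > 0" and t: "t > 0"
  shows "hausdorff_outer s ((\<lambda>x. t *\<^sub>R x) ` A) = ennreal (t ^ s) * hausdorff_outer s A"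
proof (rule antisym)
  show "hausdorff_outer s ((\<lambda>x. t *\<^sub>R x) ` A) \<le> ennreal (t ^ s) * hausdorff_outer s A"
    by (rule outer_scale_le[OF d0 t])
  have img: "(\<lambda>x. (1/t) *\<^sub>R x) ` (\<lambda>x. t *\<^sub>R x) ` A = A"
    using t by (force simp: image_image)
  have "hausdorff_outer s A \<le> ennreal ((1/t) ^ s) * hausdorff_outer s ((\<lambda>x. t *\<^sub>R x) ` A)"
    using outer_scale_le[OF d0, where t="1/t" and A="(\<lambda>x. t *\<^sub>R x) ` A" and s=s] t img by simp
  then have "ennreal (t ^ s) * hausdorff_outer s A \<le> ennreal (t ^ s) * (ennreal ((1/t) ^ s) * hausdorff_outer s ((\<lambda>x. t *\<^sub>R x) ` A))"
    by (rule mult_left_mono) simp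
  also have "\<dots> = ennreal (t ^ s * (1/t) ^ s) * hausdorff_outer s ((\<lambda>x. t *\<^sub>R x) ` A)"
    using t by (simp add: ennreal_mult mult.assoc)
  also have "t ^ s * (1/t) ^ s = 1" using t by (simp add: power_mult_distrib[symmetric])
  finally show "ennreal (t ^ s) * hausdorff_outer s A \<le> hausdorff_outer s ((\<lambda>x. t *\<^sub>R x) ` A)" by simp
qed

lemma hcost_translate: "hcost s (\<lambda>i. (\<lambda>x. v + x) ` U i) = hcost s U"
  unfolding hcost_def by (simp only: diameter_translate image_is_empty)

lemma outer_translate_le:
  fixes A :: "'a::euclidean_space set"
  shows "hausdorff_outer s ((\<lambda>x. v + x) ` A) \<le> hausdorff_outer s A"
  unfolding hausdorff_outer_def
proof (rule SUP_mono)
  fix \<delta> :: real assume d: "\<delta> \<in> {0<..}"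
  have "hausdorff_pre s \<delta> ((\<lambda>x. v + x) ` A) \<le> hausdorff_pre s \<delta> A"
    unfolding hausdorff_pre_alt
  proof (rule INF_mono)
    fix V :: "nat \<Rightarrow> 'a set" assume V: "V \<in> {U. A \<subseteq> (\<Union>i. U i) \<and> (\<forall>i. diameter (U i) \<le> \<delta>)}"
    show "\<exists>W\<in>{U. (\<lambda>x. v + x) ` A \<subseteq> (\<Union>i. U i) \<and> (\<forall>i. diameter (U i) \<le> \<delta>)}. hcost s W \<le> hcost s V"
    proof (rule bexI[of _ "\<lambda>i. (\<lambda>x. v + x) ` V i"])
      show "hcost s (\<lambda>i. (\<lambda>x. v + x) ` V i) \<le> hcost s V" by (simp only: hcost_translate order_refl)
      have "(\<lambda>x. v + x) ` A \<subseteq> (\<Union>i. (\<lambda>x. v + x) ` V i)" using V by blast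
      moreover have "\<forall>i. diameter ((\<lambda>x. v + x) ` V i) \<le> \<delta>" using V by (simp only: diameter_translate) simp
      ultimately show "(\<lambda>i. (\<lambda>x. v + x) ` V i) \<in> {U. (\<lambda>x. v + x) ` A \<subseteq> (\<Union>i. U i) \<and> (\<forall>i. diameter (U i) \<le> \<delta>)}"
        by blast
    qed
  qed
  then show "\<exists>m\<in>{0<..}. hausdorff_pre s \<delta> ((\<lambda>x. v + x) ` A) \<le> hausdorff_pre s m A"
    using d by blast
qed

lemma outer_translate:
  fixes A :: "'a::euclidean_space set"
  shows "hausdorff_outer s ((\<lambda>x. v + x) ` A) = hausdorff_outer s A"
proof (rule antisym)
  show "hausdorff_outer s ((\<lambda>x. v + x) ` A) \<le> hausdorff_outer s A" by (rule outer_translate_le)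
  have "(\<lambda>x. - v + x) ` (\<lambda>x. v + x) ` A = A" by (force simp: image_image)
  then show "hausdorff_outer s A \<le> hausdorff_outer s ((\<lambda>x. v + x) ` A)"
    using outer_translate_le[of s "-v" "(\<lambda>x. v + x) ` A"] by simp
qed

lemma outer_UNIV_finite:
  assumes "diameter (UNIV::'a::euclidean_space set) \<le> 0"
  shows "hausdorff_outer s (UNIV::'a set) < \<infinity>"
proof -
  let ?U = "\<lambda>i::nat. if i = 0 then (UNIV::'a set) else {}"
  have hc: "hcost s ?U = ennreal (hausdorff_const s * diameter (UNIV::'a set) ^ s)"
  proof -
    have "(\<Sum>i. ennreal (if ?U i = {} then 0 else hausdorff_const s * diameter (?U i) ^ s))
        = (\<Sum>i\<in>{0}. ennreal (if ?U i = {} then 0 else hausdorff_const s * diameter (?U i) ^ s))"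
      by (rule suminf_finite) auto
    then show ?thesis unfolding hcost_def by simp
  qed
  have "hausdorff_outer s (UNIV::'a set) \<le> ennreal (hausdorff_const s * diameter (UNIV::'a set) ^ s)"
    unfolding hausdorff_outer_def
  proof (rule SUP_least)
    fix \<delta> :: real assume "\<delta> \<in> {0<..}"
    then have d: "\<delta> > 0" by simp
    have "diameter (?U i) \<le> \<delta>" for i
      using assms d by (cases "i = 0") auto
    moreover have "(UNIV::'a set) \<subseteq> (\<Union>i. ?U i)" by (auto intro!: exI[of _ 0])
    ultimately have "?U \<in> {U. (UNIV::'a set) \<subseteq> (\<Union>i. U i) \<and> (\<forall>i. diameter (U i) \<le> \<delta>)}"
      by blast
    then show "hausdorff_pre s \<delta> (UNIV::'a set) \<le> ennreal (hausdorff_const s * diameter (UNIV::'a set) ^ s)"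
      unfolding hausdorff_pre_alt hc[symmetric] by (rule INF_lower[where f="hcost s"])
  qed
  then show ?thesis using le_less_trans[OF _ ennreal_less_top] by (simp add: top.not_eq_extremum)
qed

lemma hm_sets: "sets (hausdorff_measure s :: 'a::euclidean_space measure) = sets borel"
proof -
  have "sigma_sets (UNIV::'a set) (sets borel) = sets borel"
    using sets.sigma_sets_eq[of "borel :: 'a measure"] by simp
  then show ?thesis unfolding hausdorff_measure_def by (simp add: sets_measure_of_conv)
qed

lemma hm_emeasure:
  "emeasure (hausdorff_measure s :: 'a::euclidean_space measure) A =
    (if A \<in> sets borel \<and> measure_space UNIV (sets borel) (hausdorff_outer s :: 'a set \<Rightarrow> ennreal) then hausdorff_outer s A else 0)"
proof -
  have sig: "sigma_sets (UNIV::'a set) (sets borel) = sets borel"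
    using sets.sigma_sets_eq[of "borel :: 'a measure"] by simp
  have e: "emeasure (measure_of UNIV (sets borel) (hausdorff_outer s)) A = (if A \<in> sigma_sets UNIV (sets borel) \<and> measure_space UNIV (sigma_sets UNIV (sets borel)) (hausdorff_outer s :: 'a set \<Rightarrow> ennreal) then hausdorff_outer s A else (0::ennreal))"
    by (simp only: emeasure_measure_of_conv)
  show ?thesis unfolding hausdorff_measure_def e sig by (rule refl)
qed

lemma scale_borel:
  fixes A :: "'a::euclidean_space set"
  assumes "A \<in> sets borel" "t > 0"
  shows "(\<lambda>x. t *\<^sub>R x) ` A \<in> sets borel"
proof -
  have "(\<lambda>x. t *\<^sub>R x) ` A = (\<lambda>x. (1/t) *\<^sub>R x) -` A \<inter> space borel"
  proof (intro set_eqI iffI)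
    fix x assume "x \<in> (\<lambda>x. t *\<^sub>R x) ` A"
    then obtain a where "a \<in> A" "x = t *\<^sub>R a" by blast
    then show "x \<in> (\<lambda>x. (1/t) *\<^sub>R x) -` A \<inter> space borel" using assms(2) by simp
  next
    fix x assume "x \<in> (\<lambda>x. (1/t) *\<^sub>R x) -` A \<inter> space borel"
    then have "(1/t) *\<^sub>R x \<in> A" by simp
    moreover have "x = t *\<^sub>R ((1/t) *\<^sub>R x)" using assms(2) by simp
    ultimately show "x \<in> (\<lambda>x. t *\<^sub>R x) ` A" by blast
  qed
  also have "\<dots> \<in> sets borel"
  proof (rule measurable_sets[OF _ assms(1)])
    show "(\<lambda>x::'a. (1/t) *\<^sub>R x) \<in> borel_measurable borel"
      by (rule borel_measurable_continuous_onI) (intro continuous_on_scaleR continuous_on_diff continuous_on_const continuous_on_id)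
  qed
  finally show ?thesis .
qed

lemma translate_borel:
  fixes A :: "'a::euclidean_space set"
  assumes "A \<in> sets borel"
  shows "(\<lambda>x. v + x) ` A \<in> sets borel"
proof -
  have "(\<lambda>x. v + x) ` A = (\<lambda>x. x - v) -` A \<inter> space borel"
    by (force simp: image_iff)
  also have "\<dots> \<in> sets borel"
  proof (rule measurable_sets[OF _ assms(1)])
    show "(\<lambda>x::'a. x - v) \<in> borel_measurable borel"
      by (rule borel_measurable_continuous_onI) (intro continuous_on_scaleR continuous_on_diff continuous_on_const continuous_on_id)
  qed
  finally show ?thesis .
qed

lemma ennreal_suminf_const_top:
  fixes c :: ennreal
  assumes "c > 0"
  shows "(\<Sum>j::nat. c) = \<infinity>"
proof (rule ccontr)
  assume ne: "(\<Sum>j::nat. c) \<noteq> \<infinity>"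
  have sl: "sum (\<lambda>j. c) I \<le> (\<Sum>j::nat. c)" if "finite I" for I :: "nat set"
    by (rule sum_le_suminf) (use that in auto)
  have "c \<le> (\<Sum>j::nat. c)" using sl[of "{0}"] by simp
  then have "c \<noteq> \<infinity>" using ne by (auto simp: top_unique)
  then obtain r where r: "c = ennreal r" "r > 0" using assms
    by (metis ennreal_cases ennreal_less_zero_iff infinity_ennreal_def not_gr_zero)
  obtain S where S: "(\<Sum>j::nat. c) = ennreal S" "S \<ge> 0" using ne
    by (metis ennreal_cases infinity_ennreal_def)
  obtain n where n: "S < of_nat n * r" using ex_less_of_nat_mult[OF r(2)] by blast
  have "sum (\<lambda>j. c) {..<n} = ennreal (of_nat n * r)"
    using r by (simp add: ennreal_mult ennreal_of_nat_eq_real_of_nat)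
  then have "ennreal (of_nat n * r) \<le> ennreal S" using sl[of "{..<n}"] S by simp
  then have "of_nat n * r \<le> S" using S(2) by (simp add: ennreal_le_iff)
  with n show False by simp
qed

lemma hm_emeasure_MS:
  assumes "measure_space UNIV (sets borel) (hausdorff_outer s :: 'a::euclidean_space set \<Rightarrow> ennreal)"
    and "A \<in> sets borel"
  shows "emeasure (hausdorff_measure s :: 'a measure) A = hausdorff_outer s A"
  using assms by (simp add: hm_emeasure)

lemma hm_zero:
  fixes B :: "'a::euclidean_space set"
  assumes d0: "diameter (UNIV::'a set) \<le> 0"
    and MS: "measure_space UNIV (sets borel) (hausdorff_outer s :: 'a set \<Rightarrow> ennreal)"
    and B: "B \<in> sets borel"
  shows "hausdorff_outer s B = 0"
proof (rule ccontr)
  assume nz: "hausdorff_outer s B \<noteq> 0"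
  define M where "M = (hausdorff_measure s :: 'a measure)"
  have sM: "sets M = sets borel" unfolding M_def by (rule hm_sets)
  have em: "emeasure M A = hausdorff_outer s A" if "A \<in> sets borel" for A
    unfolding M_def by (rule hm_emeasure_MS[OF MS that])
  have fin: "emeasure M UNIV < \<infinity>"
    using em[of UNIV] outer_UNIV_finite[OF d0, of s] by simp
  define Bk where "Bk k = B \<inter> cball 0 (real k)" for k :: nat
  have Bk_sets: "Bk k \<in> sets borel" for k unfolding Bk_def using B by auto
  have "incseq Bk" unfolding Bk_def incseq_def by (auto simp: subset_eq)
  moreover have "range Bk \<subseteq> sets M" using Bk_sets sM by auto
  ultimately have "(SUP k. emeasure M (Bk k)) = emeasure M (\<Union>(range Bk))"
    by (intro SUP_emeasure_incseq)
  moreover have "\<Union>(range Bk) = B"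
    unfolding Bk_def by (auto simp: dist_norm) (meson real_arch_simple)
  ultimately have "(SUP k. emeasure M (Bk k)) = emeasure M B" by simp
  also have "\<dots> \<noteq> 0" using em[OF B] nz by simp
  finally obtain k where k: "emeasure M (Bk k) \<noteq> 0"
    by (metis (mono_tags, lifting) SUP_bot_conv(2) bot_ennreal)
  define R where "R = real k"
  have R0: "R \<ge> 0" unfolding R_def by simp
  obtain e :: 'a where e: "e \<in> Basis" using nonempty_Basis by blast
  define v where "v = (2 * R + 1) *\<^sub>R e"
  have nv: "norm v = 2 * R + 1" unfolding v_def using e R0 by simp
  define D where "D j = (\<lambda>x. (real j *\<^sub>R v) + x) ` Bk k" for j :: nat
  have D_sets: "D j \<in> sets borel" for j unfolding D_def by (rule translate_borel[OF Bk_sets])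
  have D_em: "emeasure M (D j) = emeasure M (Bk k)" for j
    using em[OF D_sets[of j]] em[OF Bk_sets[of k]] unfolding D_def by (simp add: outer_translate)
  have "disjoint_family D"
    unfolding disjoint_family_on_def
  proof (intro ballI impI)
    fix i j :: nat assume "i \<noteq> j"
    show "D i \<inter> D j = {}"
    proof (rule ccontr)
      assume "D i \<inter> D j \<noteq> {}"
      then obtain a b where ab: "a \<in> Bk k" "b \<in> Bk k" "real i *\<^sub>R v + a = real j *\<^sub>R v + b"
        unfolding D_def by blast
      then have "(real i - real j) *\<^sub>R v = b - a" by (simp add: algebra_simps)
      then have "\<bar>real i - real j\<bar> * (2 * R + 1) = norm (b - a)" using nv by (metis norm_scaleR)
      also have "\<dots> \<le> norm b + norm a" by (rule norm_triangle_ineq4)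
      also have "\<dots> \<le> 2 * R" using ab(1,2) unfolding Bk_def R_def by auto
      finally have "\<bar>real i - real j\<bar> * (2 * R + 1) \<le> 2 * R" .
      moreover have "\<bar>real i - real j\<bar> \<ge> 1" using \<open>i \<noteq> j\<close> by linarith
      ultimately show False using R0
        by (smt (verit, ccfv_SIG) mult_le_cancel_right1)
    qed
  qed
  moreover have "range D \<subseteq> sets M" using D_sets sM by auto
  ultimately have "(\<Sum>j. emeasure M (D j)) = emeasure M (\<Union>(range D))"
    by (intro suminf_emeasure)
  also have "\<dots> \<le> emeasure M UNIV"
    by (rule emeasure_mono) (auto simp: sM)
  finally have "(\<Sum>j::nat. emeasure M (Bk k)) < \<infinity>" using fin D_em by simp
  moreover have "(\<Sum>j::nat. emeasure M (Bk k)) = \<infinity>"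
    by (rule ennreal_suminf_const_top) (use k in \<open>simp add: zero_less_iff_neq_zero\<close>)
  ultimately show False by simp
qed

lemma hm_scale:
  fixes A :: "'a::euclidean_space set"
  assumes A: "A \<in> sets borel" and t: "t > 0"
  shows "emeasure (hausdorff_measure s :: 'a measure) ((\<lambda>x. t *\<^sub>R x) ` A) = ennreal (t ^ s) * emeasure (hausdorff_measure s :: 'a measure) A"
proof (cases "measure_space UNIV (sets borel) (hausdorff_outer s :: 'a set \<Rightarrow> ennreal)")
  case False
  then show ?thesis by (simp add: hm_emeasure)
next
  case MS: True
  have tA: "(\<lambda>x. t *\<^sub>R x) ` A \<in> sets borel" by (rule scale_borel[OF A t])
  show ?thesis
  proof (cases "diameter (UNIV::'a set) > 0")
    case True
    then show ?thesis using hm_emeasure_MS[OF MS A] hm_emeasure_MS[OF MS tA] outer_scale[OF True t] by simp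
  next
    case False
    then have d0: "diameter (UNIV::'a set) \<le> 0" by simp
    show ?thesis using hm_emeasure_MS[OF MS A] hm_emeasure_MS[OF MS tA]
        hm_zero[OF d0 MS A] hm_zero[OF d0 MS tA] by simp
  qed
qed

lemma hm_integral_scale:
  fixes f :: "'a::euclidean_space \<Rightarrow> ennreal"
  assumes f: "f \<in> borel_measurable borel" and t: "t > 0"
  shows "(\<integral>\<^sup>+x. f x \<partial>(hausdorff_measure s :: 'a measure)) =
         ennreal (t ^ s) * (\<integral>\<^sup>+y. f (t *\<^sub>R y) \<partial>(hausdorff_measure s :: 'a measure))"
proof -
  define \<mu> where "\<mu> = (hausdorff_measure s :: 'a measure)"
  have sM: "sets \<mu> = sets borel" unfolding \<mu>_def by (rule hm_sets)
  have spM: "space \<mu> = UNIV" using sets_eq_imp_space_eq[OF sM] by simp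
  have Tm: "(\<lambda>y::'a. t *\<^sub>R y) \<in> measurable \<mu> borel"
  proof -
    have "(\<lambda>y::'a. t *\<^sub>R y) \<in> borel_measurable borel"
      by (rule borel_measurable_continuous_onI) (intro continuous_on_scaleR continuous_on_const continuous_on_id)
    then show ?thesis using measurable_cong_sets[OF sM refl] by blast
  qed
  have fm: "f \<in> borel_measurable \<mu>" using f measurable_cong_sets[OF sM refl] by blast
  have eq: "distr \<mu> borel (\<lambda>y. t *\<^sub>R y) = density \<mu> (\<lambda>_. ennreal ((1/t) ^ s))"
  proof (rule measure_eqI)
    show "sets (distr \<mu> borel (\<lambda>y. t *\<^sub>R y)) = sets (density \<mu> (\<lambda>_. ennreal ((1/t) ^ s)))"
      using sM by simp
    fix A assume "A \<in> sets (distr \<mu> borel (\<lambda>y. t *\<^sub>R y))"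
    then have A: "A \<in> sets borel" by simp
    have pre: "(\<lambda>y. t *\<^sub>R y) -` A \<inter> space \<mu> = (\<lambda>x. (1/t) *\<^sub>R x) ` A"
    proof (intro set_eqI iffI)
      fix x assume "x \<in> (\<lambda>y. t *\<^sub>R y) -` A \<inter> space \<mu>"
      then have "t *\<^sub>R x \<in> A" by simp
      moreover have "x = (1/t) *\<^sub>R (t *\<^sub>R x)" using t by simp
      ultimately show "x \<in> (\<lambda>x. (1/t) *\<^sub>R x) ` A" by blast
    next
      fix x assume "x \<in> (\<lambda>x. (1/t) *\<^sub>R x) ` A"
      then obtain a where "a \<in> A" "x = (1/t) *\<^sub>R a" by blast
      then show "x \<in> (\<lambda>y. t *\<^sub>R y) -` A \<inter> space \<mu>" using t spM by simp
    qed
    have "emeasure (distr \<mu> borel (\<lambda>y. t *\<^sub>R y)) A = emeasure \<mu> ((\<lambda>y. t *\<^sub>R y) -` A \<inter> space \<mu>)"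
      by (rule emeasure_distr[OF Tm A])
    also have "\<dots> = emeasure \<mu> ((\<lambda>x. (1/t) *\<^sub>R x) ` A)"
      by (simp only: pre)
    also have "\<dots> = ennreal ((1/t) ^ s) * emeasure \<mu> A"
      unfolding \<mu>_def by (rule hm_scale[OF A]) (use t in simp)
    also have "\<dots> = (\<integral>\<^sup>+x. ennreal ((1/t) ^ s) * indicator A x \<partial>\<mu>)"
      using nn_integral_cmult_indicator[of A \<mu> "ennreal ((1/t) ^ s)"] A sM by simp
    also have "\<dots> = emeasure (density \<mu> (\<lambda>_. ennreal ((1/t) ^ s))) A"
      by (rule emeasure_density[symmetric]) (use A sM in auto)
    finally show "emeasure (distr \<mu> borel (\<lambda>y. t *\<^sub>R y)) A = emeasure (density \<mu> (\<lambda>_. ennreal ((1/t) ^ s))) A" .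
  qed
  have "(\<integral>\<^sup>+y. f (t *\<^sub>R y) \<partial>\<mu>) = (\<integral>\<^sup>+x. f x \<partial>distr \<mu> borel (\<lambda>y. t *\<^sub>R y))"
  proof (rule nn_integral_distr[symmetric, OF Tm])
    have "sets (distr \<mu> borel (\<lambda>y. t *\<^sub>R y)) = sets borel" by simp
    then show "f \<in> borel_measurable (distr \<mu> borel (\<lambda>y. t *\<^sub>R y))"
      using f measurable_cong_sets[of "distr \<mu> borel (\<lambda>y. t *\<^sub>R y)" borel borel borel] by blast
  qed
  also have "\<dots> = (\<integral>\<^sup>+x. ennreal ((1/t) ^ s) * f x \<partial>\<mu>)"
    unfolding eq by (rule nn_integral_density) (use fm in auto)
  also have "\<dots> = ennreal ((1/t) ^ s) * (\<integral>\<^sup>+x. f x \<partial>\<mu>)"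
    by (rule nn_integral_cmult[OF fm])
  finally have "ennreal (t ^ s) * (\<integral>\<^sup>+y. f (t *\<^sub>R y) \<partial>\<mu>) = ennreal (t ^ s) * ennreal ((1/t) ^ s) * (\<integral>\<^sup>+x. f x \<partial>\<mu>)"
    by (simp add: mult.assoc)
  also have "ennreal (t ^ s) * ennreal ((1/t) ^ s) = 1"
    using t by (simp add: ennreal_mult[symmetric] power_mult_distrib[symmetric])
  finally show ?thesis unfolding \<mu>_def by simp
qed

lemma exp_diff_le:
  fixes x y :: real
  assumes "y \<le> x" "x \<le> 0"
  shows "exp x \<le> exp y + (x - y)"
proof -
  have "exp x - exp y = exp x * (1 - exp (y - x))" by (simp add: algebra_simps exp_diff)
  also have "\<dots> \<le> 1 * (1 - exp (y - x))"
    by (rule mult_right_mono) (use assms in auto)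
  also have "\<dots> = 1 - exp (y - x)" by simp
  also have "\<dots> \<le> x - y" using exp_ge_add_one_self[of "y - x"] by linarith
  finally show ?thesis by simp
qed

lemma gauss_bounds:
  fixes \<mu> :: "'a::euclidean_space measure"
  assumes sM: "sets \<mu> = sets borel" and G: "G \<in> sets borel"
    and nb: "\<And>y. y \<in> G \<Longrightarrow> 1 \<le> norm y \<and> norm y \<le> R"
  defines "J \<equiv> \<lambda>t::real. \<integral>\<^sup>+y. indicator G y * ennreal (exp (- (t\<^sup>2 * (norm y)\<^sup>2) / 2)) \<partial>\<mu>"
  shows "J t \<le> ennreal (exp (- t\<^sup>2 / 2)) * emeasure \<mu> G"
    and "ennreal (exp (- (t\<^sup>2 * R\<^sup>2) / 2)) * emeasure \<mu> G \<le> J t"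
    and "0 \<le> a \<Longrightarrow> a \<le> b \<Longrightarrow> J b \<le> J a"
    and "0 \<le> a \<Longrightarrow> a \<le> b \<Longrightarrow> J a \<le> J b + ennreal ((b\<^sup>2 - a\<^sup>2) * R\<^sup>2 / 2) * emeasure \<mu> G"
proof -
  have Gs: "G \<in> sets \<mu>" using G sM by simp
  have meas: "(\<lambda>y. indicator G y * ennreal (exp (- (t\<^sup>2 * (norm y)\<^sup>2) / 2))) \<in> borel_measurable \<mu>" for t
  proof -
    have "(\<lambda>y::'a. indicator G y * ennreal (exp (- (t\<^sup>2 * (norm y)\<^sup>2) / 2))) \<in> borel_measurable borel"
      using G by measurable
    then show ?thesis using measurable_cong_sets[OF sM refl] by blast
  qed
  have ind: "(\<integral>\<^sup>+y. c * indicator G y \<partial>\<mu>) = c * emeasure \<mu> G" for c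
    using nn_integral_cmult_indicator[OF Gs, of c] by simp
  have "J t \<le> (\<integral>\<^sup>+y. ennreal (exp (- t\<^sup>2 / 2)) * indicator G y \<partial>\<mu>)"
    unfolding J_def
  proof (rule nn_integral_mono)
    fix y :: 'a
    show "indicator G y * ennreal (exp (- (t\<^sup>2 * (norm y)\<^sup>2) / 2)) \<le> ennreal (exp (- t\<^sup>2 / 2)) * indicator G y"
    proof (cases "y \<in> G")
      case True
      then have "1 \<le> (norm y)\<^sup>2" using nb by (simp add: one_le_power)
      then have "t\<^sup>2 \<le> t\<^sup>2 * (norm y)\<^sup>2" by (simp add: mult_le_cancel_left1)
      then show ?thesis using True by (simp add: ennreal_leI)
    qed simp
  qed
  then show "J t \<le> ennreal (exp (- t\<^sup>2 / 2)) * emeasure \<mu> G" using ind by simp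
  have "(\<integral>\<^sup>+y. ennreal (exp (- (t\<^sup>2 * R\<^sup>2) / 2)) * indicator G y \<partial>\<mu>) \<le> J t"
    unfolding J_def
  proof (rule nn_integral_mono)
    fix y :: 'a
    show "ennreal (exp (- (t\<^sup>2 * R\<^sup>2) / 2)) * indicator G y \<le> indicator G y * ennreal (exp (- (t\<^sup>2 * (norm y)\<^sup>2) / 2))"
    proof (cases "y \<in> G")
      case True
      then have "(norm y)\<^sup>2 \<le> R\<^sup>2" using nb by (simp add: power_mono)
      then have "t\<^sup>2 * (norm y)\<^sup>2 \<le> t\<^sup>2 * R\<^sup>2" by (simp add: mult_left_mono)
      then show ?thesis using True by (simp add: ennreal_leI)
    qed simp
  qed
  then show "ennreal (exp (- (t\<^sup>2 * R\<^sup>2) / 2)) * emeasure \<mu> G \<le> J t" using ind by simp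
  assume ab: "0 \<le> a" "a \<le> b"
  then have a2b2: "a\<^sup>2 \<le> b\<^sup>2" by (simp add: power_mono)
  show "J b \<le> J a"
    unfolding J_def
  proof (rule nn_integral_mono)
    fix y :: 'a
    have "a\<^sup>2 * (norm y)\<^sup>2 \<le> b\<^sup>2 * (norm y)\<^sup>2" using a2b2 by (simp add: mult_right_mono)
    then show "indicator G y * ennreal (exp (- (b\<^sup>2 * (norm y)\<^sup>2) / 2)) \<le> indicator G y * ennreal (exp (- (a\<^sup>2 * (norm y)\<^sup>2) / 2))"
      by (intro mult_left_mono ennreal_leI) auto
  qed
  have "J a \<le> (\<integral>\<^sup>+y. indicator G y * ennreal (exp (- (b\<^sup>2 * (norm y)\<^sup>2) / 2)) + ennreal ((b\<^sup>2 - a\<^sup>2) * R\<^sup>2 / 2) * indicator G y \<partial>\<mu>)"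
    unfolding J_def
  proof (rule nn_integral_mono)
    fix y :: 'a
    show "indicator G y * ennreal (exp (- (a\<^sup>2 * (norm y)\<^sup>2) / 2)) \<le> indicator G y * ennreal (exp (- (b\<^sup>2 * (norm y)\<^sup>2) / 2)) + ennreal ((b\<^sup>2 - a\<^sup>2) * R\<^sup>2 / 2) * indicator G y"
    proof (cases "y \<in> G")
      case True
      have ny: "(norm y)\<^sup>2 \<le> R\<^sup>2" using nb[OF True] by (simp add: power_mono)
      have e1: "exp (- (a\<^sup>2 * (norm y)\<^sup>2) / 2) \<le> exp (- (b\<^sup>2 * (norm y)\<^sup>2) / 2) + ((- (a\<^sup>2 * (norm y)\<^sup>2) / 2) - (- (b\<^sup>2 * (norm y)\<^sup>2) / 2))"
        by (rule exp_diff_le) (use a2b2 in \<open>auto intro: mult_right_mono\<close>)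
      have e2: "(- (a\<^sup>2 * (norm y)\<^sup>2) / 2) - (- (b\<^sup>2 * (norm y)\<^sup>2) / 2) = (b\<^sup>2 - a\<^sup>2) * (norm y)\<^sup>2 / 2"
        by (simp add: algebra_simps)
      have e3: "(b\<^sup>2 - a\<^sup>2) * (norm y)\<^sup>2 / 2 \<le> (b\<^sup>2 - a\<^sup>2) * R\<^sup>2 / 2"
        using ny a2b2 by (intro divide_right_mono mult_left_mono) auto
      have "exp (- (a\<^sup>2 * (norm y)\<^sup>2) / 2) \<le> exp (- (b\<^sup>2 * (norm y)\<^sup>2) / 2) + (b\<^sup>2 - a\<^sup>2) * R\<^sup>2 / 2"
        using e1 e2 e3 by linarith
      then have "ennreal (exp (- (a\<^sup>2 * (norm y)\<^sup>2) / 2)) \<le> ennreal (exp (- (b\<^sup>2 * (norm y)\<^sup>2) / 2) + (b\<^sup>2 - a\<^sup>2) * R\<^sup>2 / 2)"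
        by (rule ennreal_leI)
      also have "\<dots> = ennreal (exp (- (b\<^sup>2 * (norm y)\<^sup>2) / 2)) + ennreal ((b\<^sup>2 - a\<^sup>2) * R\<^sup>2 / 2)"
        using a2b2 by (intro ennreal_plus) auto
      finally show ?thesis using True by simp
    qed simp
  qed
  also have "\<dots> = J b + (\<integral>\<^sup>+y. ennreal ((b\<^sup>2 - a\<^sup>2) * R\<^sup>2 / 2) * indicator G y \<partial>\<mu>)"
    unfolding J_def by (rule nn_integral_add) (use meas Gs in auto)
  finally show "J a \<le> J b + ennreal ((b\<^sup>2 - a\<^sup>2) * R\<^sup>2 / 2) * emeasure \<mu> G" using ind by simp
qed

lemma nonuniq_real:
  fixes j :: "real \<Rightarrow> real" and q m R :: real
  assumes q: "q > 0" and m: "m > 0"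
    and up: "\<And>t. j t \<le> exp (- t\<^sup>2 / 2) * m"
    and pos: "\<And>t. j t > 0"
    and lip: "\<And>a b. 0 \<le> a \<Longrightarrow> a \<le> b \<Longrightarrow> \<bar>j a - j b\<bar> \<le> (b\<^sup>2 - a\<^sup>2) * C"
    and C: "C \<ge> 0"
  shows "\<exists>t1 t2. 0 < t1 \<and> 0 < t2 \<and> t1 \<noteq> t2 \<and> t1 powr q * j t1 = t2 powr q * j t2"
proof -
  define g where "g t = t powr q * j t" for t
  have cont: "continuous_on {a..b} g" if "0 < a" "a \<le> b" for a b
  proof -
    have L: "0 \<le> b * 2 * C" using that C by simp
    have "(b * 2 * C)-lipschitz_on {a..b} j"
    proof (rule lipschitz_onI[OF _ L])
      fix x y assume xy: "x \<in> {a..b}" "y \<in> {a..b}"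
      show "dist (j x) (j y) \<le> b * 2 * C * dist x y"
      proof (cases "x \<le> y")
        case True
        have "dist (j x) (j y) \<le> (y\<^sup>2 - x\<^sup>2) * C" using lip[of x y] True xy that by (simp add: dist_real_def)
        also have "y\<^sup>2 - x\<^sup>2 = (y - x) * (y + x)" by (simp add: power2_eq_square algebra_simps)
        also have "(y - x) * (y + x) * C \<le> (y - x) * (b * 2) * C"
          using xy True C by (intro mult_right_mono mult_left_mono) auto
        finally show ?thesis using True by (simp add: dist_real_def mult_ac)
      next
        case False
        have "dist (j x) (j y) \<le> (x\<^sup>2 - y\<^sup>2) * C" using lip[of y x] False xy that by (simp add: dist_real_def abs_minus_commute)
        also have "x\<^sup>2 - y\<^sup>2 = (x - y) * (x + y)" by (simp add: power2_eq_square algebra_simps)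
        also have "(x - y) * (x + y) * C \<le> (x - y) * (b * 2) * C"
          using xy False C by (intro mult_right_mono mult_left_mono) auto
        finally show ?thesis using False by (simp add: dist_real_def mult_ac)
      qed
    qed
    then have "continuous_on {a..b} j" by (rule lipschitz_on_continuous_on)
    moreover have "continuous_on {a..b} (\<lambda>t. t powr q)"
      by (rule continuous_on_powr') (use that in \<open>auto intro: continuous_intros\<close>)
    ultimately show ?thesis unfolding g_def by (intro continuous_on_mult)
  qed
  define v where "v = g 1"
  have v: "v > 0" unfolding v_def g_def using pos[of 1] by simp
  have gup: "g t \<le> t powr q * m" if "t > 0" for t
  proof -
    have "exp (- t\<^sup>2 / 2) \<le> 1" by simp
    then have "exp (- t\<^sup>2 / 2) * m \<le> 1 * m" using m by (intro mult_right_mono) auto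
    then have "j t \<le> m" using up[of t] by simp
    then show ?thesis unfolding g_def using that by (intro mult_left_mono) auto
  qed
  have gup2: "g t \<le> t powr q * exp (- t\<^sup>2 / 2) * m" if "t > 0" for t
    unfolding g_def using up[of t] that by (simp add: mult.assoc mult_left_mono)
  have l0: "((\<lambda>t::real. t powr q * m) \<longlongrightarrow> 0) (at_right 0)"
    using q by real_asymp
  have "\<forall>\<^sub>F t in at_right 0. t powr q * m < v" using order_tendstoD(2)[OF l0 v] .
  then obtain b0 where b0: "b0 > 0" "\<And>y. y > 0 \<Longrightarrow> y < b0 \<Longrightarrow> y powr q * m < v"
    unfolding eventually_at_right_field by auto
  define a where "a = min (b0 / 2) (1 / 2)"
  have a01: "0 < a" "a < 1" "a < b0" using b0 unfolding a_def by (auto simp: min_def)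
  have "g a \<le> a powr q * m" using gup[of a] a01 by simp
  also have "\<dots> < v" using b0(2)[of a] a01 by simp
  finally have a: "0 < a" "a < 1" "g a < v" using a01 by auto
  have linf: "((\<lambda>t::real. t powr q * exp (- t\<^sup>2 / 2) * m) \<longlongrightarrow> 0) at_top"
    by real_asymp
  have "\<forall>\<^sub>F t in at_top. t powr q * exp (- t\<^sup>2 / 2) * m < v" using order_tendstoD(2)[OF linf v] .
  then obtain N where N: "\<And>t. t \<ge> N \<Longrightarrow> t powr q * exp (- t\<^sup>2 / 2) * m < v"
    unfolding eventually_at_top_linorder by auto
  define b where "b = max N 2"
  have b1: "b > 1" "b \<ge> N" unfolding b_def by auto
  have "g b \<le> b powr q * exp (- b\<^sup>2 / 2) * m" using gup2[of b] b1 by simp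
  also have "\<dots> < v" using N[OF b1(2)] .
  finally have b: "b > 1" "g b < v" using b1 by auto
  define y where "y = (max (g a) (g b) + v) / 2"
  have y: "g a < y" "g b < y" "y < v" using a b unfolding y_def by auto
  have c1: "continuous_on {a..1} g" using cont[of a 1] a by simp
  have c2: "continuous_on {1..b} g" using cont[of 1 b] b by simp
  have "\<exists>x\<ge>a. x \<le> 1 \<and> g x = y"
    by (rule IVT'[OF _ _ _ c1]) (use y a v_def in auto)
  then obtain t1 where t1: "a \<le> t1" "t1 \<le> 1" "g t1 = y" by blast
  have "\<exists>x\<ge>1. x \<le> b \<and> g x = y"
    by (rule IVT2'[OF _ _ _ c2]) (use y b v_def in auto)
  then obtain t2 where t2: "1 \<le> t2" "t2 \<le> b" "g t2 = y" by blast
  have "t1 \<noteq> 1" using t1 y unfolding v_def by auto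
  have "t2 \<noteq> 1" using t2 y unfolding v_def by auto
  have "0 < t1" "0 < t2" "t1 \<noteq> t2" using t1 t2 a \<open>t1 \<noteq> 1\<close> \<open>t2 \<noteq> 1\<close> by auto
  moreover have "t1 powr q * j t1 = t2 powr q * j t2" using t1(3) t2(3) unfolding g_def by simp
  ultimately show ?thesis by blast
qed

lemma nonuniq_core:
  fixes \<mu> :: "'a::euclidean_space measure"
  assumes sM: "sets \<mu> = sets borel" and G: "G \<in> sets borel"
    and nb: "\<And>y. y \<in> G \<Longrightarrow> 1 \<le> norm y \<and> norm y \<le> R" and q: "q > 0"
  defines "J \<equiv> \<lambda>t::real. \<integral>\<^sup>+y. indicator G y * ennreal (exp (- (t\<^sup>2 * (norm y)\<^sup>2) / 2)) \<partial>\<mu>"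
  shows "\<exists>t1 t2. 0 < t1 \<and> 0 < t2 \<and> t1 \<noteq> t2 \<and> ennreal (t1 powr q) * J t1 = ennreal (t2 powr q) * J t2"
proof -
  have B1: "J t \<le> ennreal (exp (- t\<^sup>2 / 2)) * emeasure \<mu> G" for t
    unfolding J_def by (rule gauss_bounds(1)[OF sM G nb])
  have B2: "ennreal (exp (- (t\<^sup>2 * R\<^sup>2) / 2)) * emeasure \<mu> G \<le> J t" for t
    unfolding J_def by (rule gauss_bounds(2)[OF sM G nb])
  have B3: "J b \<le> J a" if "0 \<le> a" "a \<le> b" for a b
    unfolding J_def by (rule gauss_bounds(3)[OF sM G nb that])
  have B4: "J a \<le> J b + ennreal ((b\<^sup>2 - a\<^sup>2) * R\<^sup>2 / 2) * emeasure \<mu> G" if "0 \<le> a" "a \<le> b" for a b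
    unfolding J_def by (rule gauss_bounds(4)[OF sM G nb that])
  consider "emeasure \<mu> G = 0" | "emeasure \<mu> G = \<infinity>" | m where "emeasure \<mu> G = ennreal m" "m > 0"
    by (metis ennreal_cases infinity_ennreal_def not_gr_zero ennreal_less_zero_iff)
  then show ?thesis
  proof cases
    case 1
    then have "J t = 0" for t using B1[of t] by simp
    then show ?thesis by (intro exI[of _ 1] exI[of _ 2]) simp
  next
    case 2
    have "J t = \<infinity>" for t
    proof -
      have "ennreal (exp (- (t\<^sup>2 * R\<^sup>2) / 2)) * emeasure \<mu> G = \<infinity>"
        using 2 by (simp add: ennreal_mult_eq_top_iff)
      then show ?thesis using B2[of t] by (simp add: top_unique)
    qed
    moreover have "ennreal (t powr q) * \<infinity> = \<infinity>" if "t > 0" for t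
      using that by (simp add: ennreal_mult_eq_top_iff)
    ultimately show ?thesis by (intro exI[of _ 1] exI[of _ 2]) simp
  next
    case 3
    note m = 3
    define j where "j t = enn2real (J t)" for t
    have fin: "J t < \<infinity>" for t
      using B1[of t] m by (metis ennreal_less_top ennreal_mult infinity_ennreal_def le_less_trans exp_ge_zero less_imp_le)
    have Jj: "J t = ennreal (j t)" for t
      unfolding j_def using fin[of t] by (simp add: less_top)
    have j0: "j t \<ge> 0" for t unfolding j_def by simp
    have up: "j t \<le> exp (- t\<^sup>2 / 2) * m" for t
    proof -
      have "ennreal (j t) \<le> ennreal (exp (- t\<^sup>2 / 2) * m)"
        using B1[of t] m Jj[of t] by (simp add: ennreal_mult)
      then show ?thesis using m by (simp add: ennreal_le_iff)
    qed
    have pos: "j t > 0" for t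
    proof -
      have "ennreal (exp (- (t\<^sup>2 * R\<^sup>2) / 2) * m) \<le> ennreal (j t)"
        using B2[of t] m Jj[of t] by (simp add: ennreal_mult)
      then have "exp (- (t\<^sup>2 * R\<^sup>2) / 2) * m \<le> j t" using j0 by (simp add: ennreal_le_iff)
      moreover have "exp (- (t\<^sup>2 * R\<^sup>2) / 2) * m > 0" using m by simp
      ultimately show ?thesis by linarith
    qed
    have lip: "\<bar>j a - j b\<bar> \<le> (b\<^sup>2 - a\<^sup>2) * (R\<^sup>2 * m / 2)" if ab: "0 \<le> a" "a \<le> b" for a b
    proof -
      have a2b2: "a\<^sup>2 \<le> b\<^sup>2" using ab by (simp add: power_mono)
      have "ennreal (j b) \<le> ennreal (j a)" using B3[OF ab] Jj by simp
      then have 1: "j b \<le> j a" using j0 by (simp add: ennreal_le_iff)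
      have "ennreal (j a) \<le> ennreal (j b) + ennreal ((b\<^sup>2 - a\<^sup>2) * R\<^sup>2 / 2) * ennreal m"
        using B4[OF ab] Jj m by simp
      also have "ennreal ((b\<^sup>2 - a\<^sup>2) * R\<^sup>2 / 2) * ennreal m = ennreal ((b\<^sup>2 - a\<^sup>2) * R\<^sup>2 / 2 * m)"
        using a2b2 m by (intro ennreal_mult[symmetric]) auto
      also have "ennreal (j b) + \<dots> = ennreal (j b + (b\<^sup>2 - a\<^sup>2) * R\<^sup>2 / 2 * m)"
        using j0 a2b2 m by (intro ennreal_plus[symmetric]) auto
      finally have 2: "j a \<le> j b + (b\<^sup>2 - a\<^sup>2) * R\<^sup>2 / 2 * m"
        using j0 a2b2 m by (subst (asm) ennreal_le_iff) auto
      have "(b\<^sup>2 - a\<^sup>2) * R\<^sup>2 / 2 * m = (b\<^sup>2 - a\<^sup>2) * (R\<^sup>2 * m / 2)" by simp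
      then show ?thesis using 1 2 by linarith
    qed
    have C: "R\<^sup>2 * m / 2 \<ge> 0" using m by simp
    obtain t1 t2 where t: "0 < t1" "0 < t2" "t1 \<noteq> t2" "t1 powr q * j t1 = t2 powr q * j t2"
      using nonuniq_real[OF q m(2) up pos lip C] by blast
    have "ennreal (t1 powr q) * J t1 = ennreal (t2 powr q) * J t2"
      unfolding Jj using t(4) j0 by (simp add: ennreal_mult[symmetric])
    then show ?thesis using t by blast
  qed
qed

lemma polar_int_bound:
  fixes C :: "'a::euclidean_space set"
  assumes "u \<in> interior (polar_cone C)"
  obtains r where "r > 0" "\<And>x. x \<in> C \<Longrightarrow> u \<bullet> x \<le> - r * norm x"
proof -
  obtain e where e: "e > 0" "ball u e \<subseteq> polar_cone C" using assms mem_interior by blast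
  have "u \<bullet> x \<le> - (e/2) * norm x" if x: "x \<in> C" for x
  proof (cases "x = 0")
    case True then show ?thesis by simp
  next
    case False
    define w where "w = u + (e/2) *\<^sub>R (x /\<^sub>R norm x)"
    have "dist u w = e/2" unfolding w_def using False e by (simp add: dist_norm)
    then have "w \<in> polar_cone C" using e by auto
    then have "w \<bullet> x \<le> 0" using x unfolding polar_cone_def by auto
    moreover have "w \<bullet> x = u \<bullet> x + (e/2) * norm x"
      unfolding w_def using False by (simp add: inner_add_left dot_square_norm power2_eq_square)
    ultimately show ?thesis by simp
  qed
  then show ?thesis using that[of "e/2"] e by simp
qed

locale geo =
  fixes C :: "'a::euclidean_space set" and u0 :: 'a
  assumes pfc: "pointed_full_cone C" and u0: "u0 \<in> Omega C"
begin

definition K :: "real \<Rightarrow> 'a set" where "K t = C \<inter> {x. x \<bullet> u0 \<le> - t}"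
definition G :: "real \<Rightarrow> 'a set" where "G t = {x \<in> C. x \<bullet> u0 = - t} \<inter> interior C"

lemma coneC: "cone C" and convC: "convex C" and closedC: "closed C" and affC: "aff_dim C = int DIM('a)"
  using pfc unfolding pointed_full_cone_def by auto

lemma u0norm: "norm u0 = 1" and u0int: "u0 \<in> interior (polar_cone C)"
  using u0 unfolding Omega_def by auto

lemma C_scale: "x \<in> C \<Longrightarrow> c \<ge> 0 \<Longrightarrow> c *\<^sub>R x \<in> C"
  using coneC unfolding cone_def by auto

lemma C_add: assumes "x \<in> C" "y \<in> C" shows "x + y \<in> C"
proof -
  have "(1/2) *\<^sub>R x + (1 - 1/2) *\<^sub>R y \<in> C" using convC assms unfolding convex_def by auto
  then have "2 *\<^sub>R ((1/2) *\<^sub>R x + (1 - 1/2) *\<^sub>R y) \<in> C" by (rule C_scale) simp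
  then show ?thesis by (simp add: scaleR_add_right)
qed

lemma C_nonzero: obtains x0 where "x0 \<in> C" "x0 \<noteq> 0"
proof -
  have "\<not> C \<subseteq> {0}"
  proof
    assume "C \<subseteq> {0}"
    then have "C = {} \<or> C = {0}" by auto
    then have "aff_dim C \<le> 0" by auto
    with affC show False using DIM_positive[where 'a='a] by simp
  qed
  then show ?thesis using that by auto
qed

lemma r0_ex: "\<exists>r>0. \<forall>x\<in>C. u0 \<bullet> x \<le> - r * norm x"
proof -
  obtain r where r: "r > 0" "\<And>x. x \<in> C \<Longrightarrow> u0 \<bullet> x \<le> - r * norm x"
    using polar_int_bound[OF u0int] by auto
  then show ?thesis by auto
qed

lemma C_neg: "x \<in> C \<Longrightarrow> x \<noteq> 0 \<Longrightarrow> x \<bullet> u0 < 0"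
proof -
  assume x: "x \<in> C" "x \<noteq> 0"
  obtain r0 where r0: "r0 > 0" "\<And>x. x \<in> C \<Longrightarrow> u0 \<bullet> x \<le> - r0 * norm x" using r0_ex by auto
  have "u0 \<bullet> x \<le> - r0 * norm x" using r0 x by blast
  moreover have "r0 * norm x > 0" using r0 x by simp
  ultimately show ?thesis by (simp add: inner_commute)
qed

lemma C_le0: "x \<in> C \<Longrightarrow> x \<bullet> u0 \<le> 0"
  using C_neg by (cases "x = 0") (auto simp: less_imp_le)

lemma point_ex: assumes "t \<ge> 0" obtains y where "y \<in> C" "y \<bullet> u0 = - t"
proof -
  obtain x0 where x0: "x0 \<in> C" "x0 \<noteq> 0" by (rule C_nonzero)
  define a0 where "a0 = - (x0 \<bullet> u0)"
  have a0: "a0 > 0" unfolding a0_def using C_neg[OF x0] by simp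
  have "(t / a0) *\<^sub>R x0 \<in> C" using x0 a0 assms by (intro C_scale) auto
  moreover have "((t / a0) *\<^sub>R x0) \<bullet> u0 = - t" using a0 unfolding a0_def by simp
  ultimately show ?thesis using that by blast
qed

lemma K_closed: "closed (K t)"
proof -
  have "closed {x. u0 \<bullet> x \<le> - t}" by (rule closed_halfspace_le)
  then show ?thesis unfolding K_def using closedC by (simp add: inner_commute closed_Int)
qed

lemma K_convex: "convex (K t)"
proof -
  have "convex {x. u0 \<bullet> x \<le> - t}" by (rule convex_halfspace_le)
  then show ?thesis unfolding K_def using convC by (simp add: inner_commute convex_Int)
qed

lemma K_recession:
  assumes t: "t > 0"
  shows "recession_cone (K t) = C"
proof (intro set_eqI iffI)
  fix z assume z: "z \<in> C"
  show "z \<in> recession_cone (K t)"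
    unfolding recession_cone_def
  proof (intro CollectI subsetI)
    fix w assume "w \<in> (\<lambda>y. y + z) ` K t"
    then obtain y where y: "y \<in> C" "y \<bullet> u0 \<le> - t" "w = y + z" by (auto simp: K_def)
    then show "w \<in> K t"
      using C_add[of y z] z C_le0[OF z] by (simp add: inner_add_left K_def)
  qed
next
  fix z assume z: "z \<in> recession_cone (K t)"
  then have step: "y \<in> K t \<Longrightarrow> y + z \<in> K t" for y unfolding recession_cone_def by auto
  obtain y where y: "y \<in> C" "y \<bullet> u0 = - t" using point_ex[of t] t by auto
  have yK: "y \<in> K t" unfolding K_def using y by simp
  have inK: "y + real n *\<^sub>R z \<in> K t" for n
  proof (induction n)
    case 0 then show ?case using yK by simp
  next
    case (Suc n)
    then have "y + real n *\<^sub>R z + z \<in> K t" by (rule step)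
    then show ?case by (simp add: algebra_simps)
  qed
  define f where "f n = (1 / real (Suc n)) *\<^sub>R (y + real (Suc n) *\<^sub>R z)" for n
  have fC: "f n \<in> C" for n
    unfolding f_def using inK[of "Suc n"] by (intro C_scale) (auto simp: K_def)
  have f_eq: "f n = (1 / real (Suc n)) *\<^sub>R y + z" for n
    unfolding f_def by (simp add: scaleR_add_right)
  have "(\<lambda>n. (1 / real (Suc n)) *\<^sub>R y + z) \<longlonglongrightarrow> 0 *\<^sub>R y + z"
    by (intro tendsto_intros LIMSEQ_Suc[OF lim_const_over_n] )
  then have "f \<longlonglongrightarrow> z" unfolding f_eq[abs_def] by simp
  then show "z \<in> C" using closedC fC closed_sequentially by blast
qed

lemma K_in_Kclass:
  assumes t: "t > 0" and \<omega>: "\<omega> \<subseteq> Omega C" "u0 \<in> \<omega>"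
  shows "K t \<in> Kclass C \<omega>"
proof -
  obtain y where y: "y \<in> C" "y \<bullet> u0 = - t" using point_ex[of t] t by auto
  have yK: "y \<in> K t" unfolding K_def using y by simp
  have ps: "pseudo_cone C (K t)"
    unfolding pseudo_cone_def
  proof (intro conjI allI impI)
    show "K t \<noteq> {}" using yK by auto
    show "closed (K t)" by (rule K_closed)
    show "convex (K t)" by (rule K_convex)
    show "0 \<notin> K t" unfolding K_def using t by simp
    show "recession_cone (K t) = C" by (rule K_recession[OF t])
    fix l :: real assume l: "1 \<le> l"
    show "(*\<^sub>R) l ` K t \<subseteq> K t"
    proof
      fix x assume "x \<in> (*\<^sub>R) l ` K t"
      then obtain a where a: "a \<in> K t" "x = l *\<^sub>R a" by auto
      have "a \<in> C" "a \<bullet> u0 \<le> - t" using a unfolding K_def by auto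
      moreover have "l * (a \<bullet> u0) \<le> 1 * (a \<bullet> u0)"
        using l \<open>a \<bullet> u0 \<le> - t\<close> t by (intro mult_right_mono_neg) auto
      ultimately show "x \<in> K t" using a l C_scale[of a l] unfolding K_def by auto
    qed
  qed
  have bdd: "bdd_above ((\<lambda>y. u \<bullet> y) ` K t)" if "u \<in> \<omega>" for u
  proof -
    have "u \<in> polar_cone C" using that \<omega> interior_subset unfolding Omega_def by auto
    then have "u \<bullet> y \<le> 0" if "y \<in> K t" for y using that unfolding polar_cone_def K_def by auto
    then show ?thesis by (intro bdd_aboveI2[where M=0]) blast
  qed
  have "K t = C \<inter> (\<Inter>u\<in>\<omega>. {x. x \<bullet> u \<le> support_fun (K t) u})"
  proof (intro set_eqI iffI)
    fix x assume x: "x \<in> K t"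
    have "x \<bullet> u \<le> support_fun (K t) u" if "u \<in> \<omega>" for u
      unfolding support_fun_def using cSUP_upper[OF x bdd[OF that]] by (simp add: inner_commute)
    then show "x \<in> C \<inter> (\<Inter>u\<in>\<omega>. {x. x \<bullet> u \<le> support_fun (K t) u})" using x unfolding K_def by auto
  next
    fix x assume x: "x \<in> C \<inter> (\<Inter>u\<in>\<omega>. {x. x \<bullet> u \<le> support_fun (K t) u})"
    then have "x \<bullet> u0 \<le> support_fun (K t) u0" using \<omega> by auto
    also have "support_fun (K t) u0 \<le> - t"
      unfolding support_fun_def using yK by (intro cSUP_least) (auto simp: K_def inner_commute)
    finally show "x \<in> K t" using x unfolding K_def by auto
  qed
  then show ?thesis unfolding Kclass_def using ps by blast
qed

lemma K_inj:
  assumes "0 < s" "0 < t" "s \<noteq> t"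
  shows "K s \<noteq> K t"
proof -
  { fix a b :: real assume ab: "0 < a" "a < b"
    obtain y where y: "y \<in> C" "y \<bullet> u0 = - a" using point_ex[of a] ab by auto
    then have "y \<in> K a" "y \<notin> K b" unfolding K_def using ab by auto
    then have "K a \<noteq> K b" by blast }
  then show ?thesis using assms by (metis linorder_neqE_linordered_idom)
qed

end

context geo begin

lemma G_sub_K: "x \<in> G t \<Longrightarrow> x \<in> K t"
  unfolding G_def K_def by auto

lemma G_frontier:
  assumes x: "x \<in> G t"
  shows "x \<in> frontier (K t)"
proof -
  have "x \<in> closure (K t)" using G_sub_K[OF x] closure_subset by blast
  moreover have "x \<notin> interior (K t)"
  proof
    assume "x \<in> interior (K t)"
    then obtain e where e: "e > 0" "ball x e \<subseteq> K t" using mem_interior by blast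
    define y where "y = x + (e/2) *\<^sub>R u0"
    have "dist x y = e/2" unfolding y_def using e u0norm by (simp add: dist_norm)
    then have "y \<in> K t" using e by auto
    moreover have "y \<bullet> u0 = - t + e/2"
      unfolding y_def using x u0norm by (simp add: G_def inner_add_left dot_square_norm)
    ultimately show False using e unfolding K_def by auto
  qed
  ultimately show ?thesis unfolding frontier_def by blast
qed

lemma G_normals:
  assumes x: "x \<in> G t"
  shows "outer_unit_normals (K t) x = {u0}"
proof (intro set_eqI iffI)
  fix u assume "u \<in> {u0}"
  then have "u = u0" by simp
  moreover have "\<forall>y\<in>K t. u0 \<bullet> y \<le> u0 \<bullet> x"
    using x unfolding K_def G_def by (auto simp: inner_commute)
  ultimately show "u \<in> outer_unit_normals (K t) x"
    unfolding outer_unit_normals_def using u0norm by simp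
next
  fix u assume u: "u \<in> outer_unit_normals (K t) x"
  then have nu: "norm u = 1" and nor: "\<And>y. y \<in> K t \<Longrightarrow> u \<bullet> y \<le> u \<bullet> x"
    unfolding outer_unit_normals_def by auto
  have xC: "x \<in> interior C" and xu: "x \<bullet> u0 = - t" using x unfolding G_def by auto
  obtain e where e: "e > 0" "ball x e \<subseteq> C" using xC mem_interior by blast
  have inK: "y \<in> K t" if "dist x y < e" "y \<bullet> u0 \<le> - t" for y
    using that e unfolding K_def by auto
  have uu0: "u \<bullet> u0 \<ge> 0"
  proof -
    have "x - (e/2) *\<^sub>R u0 \<in> K t"
      by (rule inK) (use e u0norm xu in \<open>auto simp: dist_norm inner_diff_left dot_square_norm\<close>)
    then have "u \<bullet> (x - (e/2) *\<^sub>R u0) \<le> u \<bullet> x" by (rule nor)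
    then have "0 \<le> e * (u \<bullet> u0)" by (simp add: inner_diff_right)
    then show ?thesis using e by (simp add: zero_le_mult_iff)
  qed
  define w0 where "w0 = u - (u \<bullet> u0) *\<^sub>R u0"
  have w0u0: "w0 \<bullet> u0 = 0" unfolding w0_def using u0norm by (simp add: inner_diff_left dot_square_norm)
  define c where "c = e / (2 * (norm w0 + 1))"
  have pos2: "2 * (norm w0 + 1) > 0" by (smt (verit) norm_ge_zero)
  then have c: "c > 0" unfolding c_def using e by (intro divide_pos_pos)
  have cw: "norm (c *\<^sub>R w0) < e"
  proof -
    have "norm (c *\<^sub>R w0) = e * norm w0 / (2 * (norm w0 + 1))" unfolding c_def using e by simp
    also have "\<dots> < e"
    proof -
      have "norm w0 < 2 * (norm w0 + 1)" by (smt (verit) norm_ge_zero)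
      then have "e * norm w0 < e * (2 * (norm w0 + 1))" by (rule mult_strict_left_mono[OF _ e(1)])
      then show ?thesis using pos2 by (simp add: divide_less_eq)
    qed
    finally show ?thesis .
  qed
  have "x + c *\<^sub>R w0 \<in> K t"
    by (rule inK) (use cw xu w0u0 in \<open>auto simp: dist_norm inner_add_left\<close>)
  then have "u \<bullet> (x + c *\<^sub>R w0) \<le> u \<bullet> x" by (rule nor)
  then have 1: "u \<bullet> w0 \<le> 0" using c by (simp add: inner_add_right mult_le_0_iff)
  have "x - c *\<^sub>R w0 \<in> K t"
    by (rule inK) (use cw xu w0u0 in \<open>auto simp: dist_norm inner_diff_left\<close>)
  then have "u \<bullet> (x - c *\<^sub>R w0) \<le> u \<bullet> x" by (rule nor)
  then have "0 \<le> c * (u \<bullet> w0)" by (simp add: inner_diff_right)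
  then have 2: "u \<bullet> w0 \<ge> 0" using c by (simp add: zero_le_mult_iff)
  have "w0 \<bullet> w0 = (u - (u \<bullet> u0) *\<^sub>R u0) \<bullet> w0" by (simp only: w0_def)
  also have "\<dots> = u \<bullet> w0 - (u \<bullet> u0) * (u0 \<bullet> w0)" by (simp only: inner_diff_left inner_scaleR_left)
  also have "\<dots> = 0" using 1 2 w0u0 by (simp add: inner_commute)
  finally have "w0 = 0" by simp
  then have ueq: "u = (u \<bullet> u0) *\<^sub>R u0" unfolding w0_def by simp
  then have "norm u = \<bar>u \<bullet> u0\<bar>" using u0norm by (metis norm_scaleR mult_1_right real_norm_def)
  then have "u \<bullet> u0 = 1" using nu uu0 by simp
  then show "u \<in> {u0}" using ueq by simp
qed

lemma affC_full: "affine hull C = UNIV"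
  using affC aff_dim_eq_full by blast

lemma zeroC: "0 \<in> C"
proof -
  obtain x0 where "x0 \<in> C" by (rule C_nonzero)
  then show ?thesis using cone_contains_0[OF coneC] by auto
qed

lemma normal_char:
  assumes t: "t > 0" and x: "x \<in> frontier (K t)" and nx: "outer_unit_normals (K t) x = {u}"
    and u: "u \<in> Omega C"
  shows "x \<in> G t"
proof -
  have xK: "x \<in> K t" using x K_closed frontier_subset_closed by blast
  then have xC: "x \<in> C" and xu: "x \<bullet> u0 \<le> - t" unfolding K_def by auto
  have x0: "x \<noteq> 0" using xu t by auto
  show ?thesis
  proof (cases "x \<in> interior C")
    case True
    show ?thesis
    proof (cases "x \<bullet> u0 = - t")
      case True
      then show ?thesis using xC \<open>x \<in> interior C\<close> unfolding G_def by auto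
    next
      case False
      then have lt: "x \<bullet> u0 < - t" using xu by simp
      have op: "open (interior C \<inter> {y. u0 \<bullet> y < - t})"
        by (intro open_Int open_interior open_halfspace_lt)
      have sub: "interior C \<inter> {y. u0 \<bullet> y < - t} \<subseteq> K t"
        unfolding K_def using interior_subset by (auto simp: inner_commute)
      have "x \<in> interior (K t)"
        using interior_maximal[OF sub op] True lt by (auto simp: inner_commute)
      then show ?thesis using x unfolding frontier_def by auto
    qed
  next
    case False
    then have "x \<notin> rel_interior C" using rel_interior_interior[OF affC_full] by simp
    then obtain a where a: "a \<noteq> 0" "\<And>y. y \<in> C \<Longrightarrow> a \<bullet> x \<le> a \<bullet> y"
      using supporting_hyperplane_rel_boundary[OF convC xC] by metis
    define v where "v = - (1 / norm a) *\<^sub>R a"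
    have nv: "norm v = 1" unfolding v_def using a by simp
    have vle: "v \<bullet> y \<le> v \<bullet> x" if "y \<in> C" for y
    proof -
      have "a \<bullet> x \<le> a \<bullet> y" by (rule a(2)[OF that])
      then have "(1 / norm a) * (a \<bullet> x) \<le> (1 / norm a) * (a \<bullet> y)" by (intro mult_left_mono) auto
      then show ?thesis unfolding v_def by simp
    qed
    have "v \<in> outer_unit_normals (K t) x"
      unfolding outer_unit_normals_def using nv vle K_def by auto
    then have "v = u" using nx by simp
    obtain r where r: "r > 0" "\<And>y. y \<in> C \<Longrightarrow> u \<bullet> y \<le> - r * norm y"
      using polar_int_bound[of u C] u unfolding Omega_def by auto
    have "u \<bullet> x \<le> - r * norm x" using r xC by blast
    moreover have "r * norm x > 0" using r x0 by simp
    moreover have "u \<bullet> 0 \<le> u \<bullet> x" using vle[OF zeroC] \<open>v = u\<close> by simp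
    ultimately show ?thesis by simp
  qed
qed

lemma inv_normal_K:
  assumes t: "t > 0" and \<eta>: "\<eta> \<subseteq> Omega C"
  shows "inv_normal (K t) \<eta> = (if u0 \<in> \<eta> then G t else {})"
proof (intro set_eqI iffI)
  fix x assume "x \<in> inv_normal (K t) \<eta>"
  then obtain u where x: "x \<in> frontier (K t)" "outer_unit_normals (K t) x = {u}" "u \<in> \<eta>"
    unfolding inv_normal_def by auto
  have xG: "x \<in> G t" by (rule normal_char[OF t x(1,2)]) (use x \<eta> in auto)
  then have "u = u0" using G_normals x(2) by simp
  then show "x \<in> (if u0 \<in> \<eta> then G t else {})" using xG x by simp
next
  fix x assume "x \<in> (if u0 \<in> \<eta> then G t else {})"
  then have "u0 \<in> \<eta>" "x \<in> G t" by (auto split: if_splits)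
  then show "x \<in> inv_normal (K t) \<eta>"
    unfolding inv_normal_def using G_frontier G_normals by blast
qed

lemma unit_normal_G: "x \<in> G t \<Longrightarrow> unit_normal (K t) x = u0"
  unfolding unit_normal_def using G_normals by simp

end

context geo begin

lemma G_borel: "G t \<in> sets borel"
proof -
  have "closed {x. u0 \<bullet> x = - t}" by (rule closed_hyperplane)
  moreover have "{x \<in> C. x \<bullet> u0 = - t} = C \<inter> {x. u0 \<bullet> x = - t}" by (auto simp: inner_commute)
  ultimately have "closed ({x \<in> C. x \<bullet> u0 = - t})"
    using closedC by (simp add: closed_Int)
  then show ?thesis unfolding G_def by (intro sets.Int borel_closed borel_open open_interior)
qed

lemma int_scale:
  assumes y: "y \<in> interior C" and c: "c > 0"
  shows "c *\<^sub>R y \<in> interior C"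
proof -
  obtain e where e: "e > 0" "ball y e \<subseteq> C" using y mem_interior by blast
  have "ball (c *\<^sub>R y) (c * e) \<subseteq> C"
  proof
    fix z assume z: "z \<in> ball (c *\<^sub>R y) (c * e)"
    have "dist y ((1/c) *\<^sub>R z) = dist (c *\<^sub>R y) z / c"
    proof -
      have "y - (1/c) *\<^sub>R z = (1/c) *\<^sub>R (c *\<^sub>R y - z)" using c by (simp add: algebra_simps)
      then show ?thesis using c by (simp add: dist_norm)
    qed
    also have "\<dots> < e" using z c by (simp add: divide_less_eq mult.commute)
    finally have "(1/c) *\<^sub>R z \<in> C" using e by auto
    then have "c *\<^sub>R ((1/c) *\<^sub>R z) \<in> C" by (rule C_scale) (use c in simp)
    then show "z \<in> C" using c by simp
  qed
  then show ?thesis using e c mem_interior by (metis mult_pos_pos)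
qed

lemma G_scale:
  assumes t: "t > 0"
  shows "G t = (\<lambda>x. t *\<^sub>R x) ` G 1"
proof (intro set_eqI iffI)
  fix x assume x: "x \<in> G t"
  have "(1/t) *\<^sub>R x \<in> G 1"
    using x t int_scale[of x "1/t"] C_scale[of x "1/t"] unfolding G_def by auto
  moreover have "x = t *\<^sub>R ((1/t) *\<^sub>R x)" using t by simp
  ultimately show "x \<in> (\<lambda>x. t *\<^sub>R x) ` G 1" by blast
next
  fix x assume "x \<in> (\<lambda>x. t *\<^sub>R x) ` G 1"
  then obtain y where y: "y \<in> G 1" "x = t *\<^sub>R y" by auto
  then show "x \<in> G t"
    using t int_scale[of y t] C_scale[of y t] unfolding G_def by auto
qed

lemma indicator_G_scale:
  assumes t: "t > 0"
  shows "indicator (G t) (t *\<^sub>R y) = (indicator (G 1) y :: ennreal)"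
proof -
  have "t *\<^sub>R y \<in> G t \<longleftrightarrow> y \<in> G 1"
  proof
    assume "t *\<^sub>R y \<in> G t"
    then obtain z where "z \<in> G 1" "t *\<^sub>R y = t *\<^sub>R z" using G_scale[OF t] by auto
    then show "y \<in> G 1" using t by simp
  next
    assume "y \<in> G 1"
    then show "t *\<^sub>R y \<in> G t" using G_scale[OF t] by auto
  qed
  then show ?thesis by (simp add: indicator_def)
qed

lemma G1_bounds:
  obtains R where "\<And>y. y \<in> G 1 \<Longrightarrow> 1 \<le> norm y \<and> norm y \<le> R"
proof -
  obtain r0 where r0: "r0 > 0" "\<And>x. x \<in> C \<Longrightarrow> u0 \<bullet> x \<le> - r0 * norm x" using r0_ex by auto
  have "1 \<le> norm y \<and> norm y \<le> 1 / r0" if y: "y \<in> G 1" for y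
  proof
    have yu: "y \<bullet> u0 = -1" "y \<in> C" using y unfolding G_def by auto
    have "\<bar>y \<bullet> u0\<bar> \<le> norm y * norm u0" by (rule Cauchy_Schwarz_ineq2)
    then show "1 \<le> norm y" using yu u0norm by simp
    have "u0 \<bullet> y \<le> - r0 * norm y" using r0 yu by blast
    then have "r0 * norm y \<le> 1" using yu by (simp add: inner_commute)
    then show "norm y \<le> 1 / r0" using r0 by (simp add: field_simps)
  qed
  then show ?thesis using that by blast
qed

lemma area_K:
  assumes t: "t > 0" and \<eta>: "\<eta> \<subseteq> Omega C"
  shows "gauss_Lp_area p (K t) \<eta> =
    (if u0 \<in> \<eta> then ennreal ((2 * pi) powr (- real DIM('a) / 2)) *
       (\<integral>\<^sup>+x. indicator (G t) x * ennreal (t powr (1 - p) * exp (- (norm x)\<^sup>2 / 2)) \<partial>(hausdorff_measure (DIM('a) - 1) :: 'a measure))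
     else 0)"
proof (cases "u0 \<in> \<eta>")
  case False
  then show ?thesis unfolding gauss_Lp_area_def inv_normal_K[OF t \<eta>] by simp
next
  case True
  have "(\<integral>\<^sup>+x. indicator (inv_normal (K t) \<eta>) x *
        ennreal (\<bar>x \<bullet> unit_normal (K t) x\<bar> powr (1 - p) * exp (- (norm x)\<^sup>2 / 2)) \<partial>(hausdorff_measure (DIM('a) - 1) :: 'a measure))
      = (\<integral>\<^sup>+x. indicator (G t) x * ennreal (t powr (1 - p) * exp (- (norm x)\<^sup>2 / 2)) \<partial>(hausdorff_measure (DIM('a) - 1) :: 'a measure))"
  proof (rule nn_integral_cong)
    fix x :: 'a
    show "indicator (inv_normal (K t) \<eta>) x * ennreal (\<bar>x \<bullet> unit_normal (K t) x\<bar> powr (1 - p) * exp (- (norm x)\<^sup>2 / 2))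
        = indicator (G t) x * ennreal (t powr (1 - p) * exp (- (norm x)\<^sup>2 / 2))"
    proof (cases "x \<in> G t")
      case True
      then have "\<bar>x \<bullet> unit_normal (K t) x\<bar> = t" using unit_normal_G t unfolding G_def by auto
      then show ?thesis using True \<open>u0 \<in> \<eta>\<close> inv_normal_K[OF t \<eta>] by simp
    next
      case False
      then show ?thesis using \<open>u0 \<in> \<eta>\<close> inv_normal_K[OF t \<eta>] by simp
    qed
  qed
  then show ?thesis unfolding gauss_Lp_area_def using True by simp
qed

lemma I_scale:
  assumes t: "t > 0"
  shows "(\<integral>\<^sup>+x. indicator (G t) x * ennreal (t powr (1 - p) * exp (- (norm x)\<^sup>2 / 2)) \<partial>(hausdorff_measure (DIM('a) - 1) :: 'a measure))
    = ennreal (t powr (real DIM('a) - p)) *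
      (\<integral>\<^sup>+y. indicator (G 1) y * ennreal (exp (- (t\<^sup>2 * (norm y)\<^sup>2) / 2)) \<partial>(hausdorff_measure (DIM('a) - 1) :: 'a measure))"
proof -
  define s where "s = DIM('a) - 1"
  define \<mu> where "\<mu> = (hausdorff_measure s :: 'a measure)"
  have sM: "sets \<mu> = sets borel" unfolding \<mu>_def by (rule hm_sets)
  have fm: "(\<lambda>x::'a. indicator (G t) x * ennreal (t powr (1 - p) * exp (- (norm x)\<^sup>2 / 2))) \<in> borel_measurable borel"
    using G_borel[of t] by measurable
  have gm: "(\<lambda>y::'a. indicator (G 1) y * ennreal (exp (- (t\<^sup>2 * (norm y)\<^sup>2) / 2))) \<in> borel_measurable \<mu>"
  proof -
    have "(\<lambda>y::'a. indicator (G 1) y * ennreal (exp (- (t\<^sup>2 * (norm y)\<^sup>2) / 2))) \<in> borel_measurable borel"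
      using G_borel[of 1] by measurable
    then show ?thesis using measurable_cong_sets[OF sM refl] by blast
  qed
  have "(\<integral>\<^sup>+x. indicator (G t) x * ennreal (t powr (1 - p) * exp (- (norm x)\<^sup>2 / 2)) \<partial>\<mu>)
      = ennreal (t ^ s) * (\<integral>\<^sup>+y. indicator (G t) (t *\<^sub>R y) * ennreal (t powr (1 - p) * exp (- (norm (t *\<^sub>R y))\<^sup>2 / 2)) \<partial>\<mu>)"
    unfolding \<mu>_def by (rule hm_integral_scale[OF fm t])
  also have "(\<integral>\<^sup>+y. indicator (G t) (t *\<^sub>R y) * ennreal (t powr (1 - p) * exp (- (norm (t *\<^sub>R y))\<^sup>2 / 2)) \<partial>\<mu>)
      = (\<integral>\<^sup>+y. ennreal (t powr (1 - p)) * (indicator (G 1) y * ennreal (exp (- (t\<^sup>2 * (norm y)\<^sup>2) / 2))) \<partial>\<mu>)"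
  proof (rule nn_integral_cong)
    fix y :: 'a
    have "(norm (t *\<^sub>R y))\<^sup>2 = t\<^sup>2 * (norm y)\<^sup>2" using t by (simp add: power_mult_distrib)
    then have "ennreal (t powr (1 - p) * exp (- (norm (t *\<^sub>R y))\<^sup>2 / 2)) = ennreal (t powr (1 - p)) * ennreal (exp (- (t\<^sup>2 * (norm y)\<^sup>2) / 2))"
      by (simp add: ennreal_mult)
    then show "indicator (G t) (t *\<^sub>R y) * ennreal (t powr (1 - p) * exp (- (norm (t *\<^sub>R y))\<^sup>2 / 2))
        = ennreal (t powr (1 - p)) * (indicator (G 1) y * ennreal (exp (- (t\<^sup>2 * (norm y)\<^sup>2) / 2)))"
      using indicator_G_scale[OF t, of y] by (simp add: ac_simps)
  qed
  also have "\<dots> = ennreal (t powr (1 - p)) * (\<integral>\<^sup>+y. indicator (G 1) y * ennreal (exp (- (t\<^sup>2 * (norm y)\<^sup>2) / 2)) \<partial>\<mu>)"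
    by (rule nn_integral_cmult[OF gm])
  finally have "(\<integral>\<^sup>+x. indicator (G t) x * ennreal (t powr (1 - p) * exp (- (norm x)\<^sup>2 / 2)) \<partial>\<mu>)
      = ennreal (t ^ s) * ennreal (t powr (1 - p)) * (\<integral>\<^sup>+y. indicator (G 1) y * ennreal (exp (- (t\<^sup>2 * (norm y)\<^sup>2) / 2)) \<partial>\<mu>)"
    by (simp add: mult.assoc)
  also have "ennreal (t ^ s) * ennreal (t powr (1 - p)) = ennreal (t powr (real DIM('a) - p))"
  proof -
    have "real s = real DIM('a) - 1" unfolding s_def using DIM_positive[where 'a='a] by simp
    then have "t ^ s * t powr (1 - p) = t powr (real DIM('a) - p)"
      using t by (simp add: powr_realpow[symmetric] powr_add[symmetric])
    then show ?thesis using t by (simp add: ennreal_mult[symmetric])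
  qed
  finally show ?thesis unfolding \<mu>_def s_def .
qed

end

theorem mainTheorem4:
  fixes C :: "'a::euclidean_space set" and \<omega> :: "'a set" and p :: real
  assumes "p < real DIM('a)"
    and "pointed_full_cone C"
    and "\<omega> \<noteq> {}" and "compact \<omega>" and "\<omega> \<subseteq> Omega C"
  shows "\<exists>K L. K \<in> Kclass C \<omega> \<and> L \<in> Kclass C \<omega> \<and> K \<noteq> L \<and>
           (\<forall>\<eta>. \<eta> \<in> sets borel \<longrightarrow> \<eta> \<subseteq> Omega C \<longrightarrow>
                 gauss_Lp_area p K \<eta> = gauss_Lp_area p L \<eta>)"
proof -
  obtain u0 where u0w: "u0 \<in> \<omega>" using assms(3) by auto
  have u0O: "u0 \<in> Omega C" using u0w assms(5) by auto
  interpret geo C u0 using assms(2) u0O by unfold_locales auto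
  obtain R where R: "\<And>y. y \<in> G 1 \<Longrightarrow> 1 \<le> norm y \<and> norm y \<le> R" using G1_bounds by auto
  have q: "real DIM('a) - p > 0" using assms(1) by simp
  obtain t1 t2 where t: "0 < t1" "0 < t2" "t1 \<noteq> t2"
    and eq: "ennreal (t1 powr (real DIM('a) - p)) *
        (\<integral>\<^sup>+y. indicator (G 1) y * ennreal (exp (- (t1\<^sup>2 * (norm y)\<^sup>2) / 2)) \<partial>(hausdorff_measure (DIM('a) - 1) :: 'a measure))
      = ennreal (t2 powr (real DIM('a) - p)) *
        (\<integral>\<^sup>+y. indicator (G 1) y * ennreal (exp (- (t2\<^sup>2 * (norm y)\<^sup>2) / 2)) \<partial>(hausdorff_measure (DIM('a) - 1) :: 'a measure))"
    using nonuniq_core[where \<mu> = "hausdorff_measure (DIM('a) - 1) :: 'a measure", OF hm_sets G_borel[of 1] R q] by auto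
  show ?thesis
  proof (rule exI[of _ "K t1"], rule exI[of _ "K t2"], intro conjI allI impI)
    show "K t1 \<in> Kclass C \<omega>" by (rule K_in_Kclass[OF t(1) assms(5) u0w])
    show "K t2 \<in> Kclass C \<omega>" by (rule K_in_Kclass[OF t(2) assms(5) u0w])
    show "K t1 \<noteq> K t2" by (rule K_inj[OF t])
    fix \<eta> :: "'a set" assume "\<eta> \<in> sets borel" "\<eta> \<subseteq> Omega C"
    show "gauss_Lp_area p (K t1) \<eta> = gauss_Lp_area p (K t2) \<eta>"
      unfolding area_K[OF t(1) \<open>\<eta> \<subseteq> Omega C\<close>] area_K[OF t(2) \<open>\<eta> \<subseteq> Omega C\<close>] I_scale[OF t(1)] I_scale[OF t(2)] eq
      by (rule refl)
  qed
qed

end
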